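(* For $p,q\in\mathbb Z_{\ge2}$, \begin{align*} &(1+(-1)^p)\zeta_2^\sharp(p,q)+(1+(-1)^q)\zeta_2^\sharp(q,p)\\ &=2\sum_{j=0}^{[p/2]}\frac{1}{2^{p+q-2j}}\binom{p+q-1-2j}{q-1}\zeta(2j)\zeta(p+q-2j)+2\sum_{j=0}^{[q/2]}\frac{1}{2^{p+q-2j}}\binom{p+q-1-2j}{p-1}\zeta(2j)\zeta(p+q-2j)-\zeta(p+q). \end{align*}
   Context: $\zeta_2^\sharp(s_1,s_2)=\sum_{m,n=1}^\infty n^{-s_1}(2m+n)^{-s_2}$; $\zeta$ is the Riemann zeta-function (so $\zeta(0)=-1/2$); $[x]$ is the integer part of $x$. *)

theory Defs
  imports "HOL-Analysis.Analysis"
begin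

text \<open>Riemann zeta function at nonnegative integer arguments.
  zeta 0 = -1/2 (value of the analytic continuation); for s >= 2 it is the
  Dirichlet series.  The value at s = 1 (a pole) is never used.\<close>
definition zeta_nat :: "nat \<Rightarrow> real" where
  "zeta_nat s = (if s = 0 then -1/2 else (\<Sum>n. 1 / (real (Suc n)) ^ s))"

definition zeta2_sharp :: "nat \<Rightarrow> nat \<Rightarrow> real" where
  "zeta2_sharp s1 s2 =
     infsum (\<lambda>(m,n). 1 / ((real n) ^ s1 * (real (2*m + n)) ^ s2))
            ({1..} \<times> {1..})"

end

theory Submission
  imports Defs
begin


lemma aux_diffB:
  fixes b :: real
  shows "(\<Sum>k\<le>Q. real (Suc P + k choose k) * b^k) - (\<Sum>k\<le>Q. real (P + k choose k) * b^k)
         = b * (\<Sum>k<Q. real (Suc P + k choose k) * b^k)"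
proof (induction Q)
  case 0 then show ?case by simp
next
  case (Suc Q)
  have e: "real (Suc P + Suc Q choose Suc Q) = real (P + Suc Q choose Suc Q) + real (Suc P + Q choose Q)"
    by (simp add: add.commute)
  show ?case using Suc by (simp add: e algebra_simps)
qed

lemma norm_id:
  fixes a b :: real
  assumes ab: "a + b = 1"
  shows "b^(Suc Q) * (\<Sum>k\<le>P. real (Q + k choose k) * a^k)
       + a^(Suc P) * (\<Sum>k\<le>Q. real (P + k choose k) * b^k) = 1"
proof (induction P)
  case 0
  have "(\<Sum>k\<le>Q. b^k) * (1 - b) = 1 - b^Suc Q"
  proof (induction Q)
    case (Suc Q)
    have "(\<Sum>k\<le>Suc Q. b^k) * (1 - b) = (\<Sum>k\<le>Q. b^k) * (1 - b) + b^Suc Q * (1 - b)"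
      by (simp add: algebra_simps)
    also have "\<dots> = 1 - b^Suc (Suc Q)" using Suc by (simp add: algebra_simps)
    finally show ?case .
  qed simp
  moreover have "a * (\<Sum>k\<le>Q. b^k) = (\<Sum>k\<le>Q. b^k) * (1 - b)"
    using ab by (simp add: algebra_simps flip: ab)
  ultimately show ?case by simp
next
  case (Suc P)
  define B where "B P' = (\<Sum>k\<le>Q. real (P' + k choose k) * b^k)" for P'
  have d: "B (Suc P) - B P = b * (\<Sum>k<Q. real (Suc P + k choose k) * b^k)"
    unfolding B_def by (rule aux_diffB)
  have s: "(\<Sum>k\<le>Q. real (Suc P + k choose k) * b^k) = (\<Sum>k<Q. real (Suc P + k choose k) * b^k) + real (Suc P + Q choose Q) * b^Q"
    by (simp add: lessThan_Suc_atMost[symmetric])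
  have sym: "(Q + Suc P choose Suc P) = (Suc P + Q choose Q)"
    by (metis add.commute binomial_symmetric add_diff_cancel_left' le_add2)
  define X where "X = (\<Sum>k<Q. real (Suc P + k choose k) * b^k)"
  define c where "c = real (Suc P + Q choose Q)"
  have B1: "B (Suc P) = X + c * b^Q" using s unfolding B_def X_def c_def by simp
  have B0: "B P = B (Suc P) - b * X" using d unfolding X_def by simp
  have "b^Suc Q * real (Q + Suc P choose Suc P) + a * B (Suc P) - B P = c*b^Q*(a+b-1) + X*(a+b-1)"
    unfolding B0 B1 sym c_def[symmetric] by (simp add: algebra_simps)
  then have key: "b^Suc Q * real (Q + Suc P choose Suc P) + a * B (Suc P) - B P = 0"
    using ab by simp
  have "b ^ Suc Q * (\<Sum>k\<le>Suc P. real (Q + k choose k) * a ^ k) + a ^ Suc (Suc P) * B (Suc P)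
     = (b ^ Suc Q * (\<Sum>k\<le>P. real (Q + k choose k) * a ^ k) + a ^ Suc P * B P)
       + a^Suc P * (b^Suc Q * real (Q + Suc P choose Suc P) + a * B (Suc P) - B P)"
    by (simp add: algebra_simps)
  also have "\<dots> = 1" using Suc key unfolding B_def by simp
  finally show ?case unfolding B_def .
qed

lemma term_simp:
  fixes x y s :: real
  assumes "x \<noteq> 0" "y \<noteq> 0" "s \<noteq> 0" "k \<le> P"
  shows "(y/s)^Suc Q * (x/s)^k / (x^Suc P * y^Suc Q) = 1/(s^(Suc Q + k) * x^(Suc P - k))"
proof -
  have e: "x^Suc P = x^k * x^(Suc P - k)"
    using assms(4) by (simp flip: power_add)
  show ?thesis using assms unfolding e by (simp add: field_simps power_add)
qed

lemma pf_k:
  fixes x y :: real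
  assumes x: "x \<noteq> 0" and y: "y \<noteq> 0" and s: "x + y \<noteq> 0" and p: "p \<ge> 1" and q: "q \<ge> 1"
  shows "1/(x^p*y^q) = (\<Sum>k<p. real (q-1+k choose k)/((x+y)^(q+k)*x^(p-k)))
                      + (\<Sum>k<q. real (p-1+k choose k)/((x+y)^(p+k)*y^(q-k)))"
proof -
  obtain P Q where P: "p = Suc P" and Q: "q = Suc Q" using p q by (metis Suc_pred' less_eq_Suc_le One_nat_def)
  define S where "S = x + y"
  have S0: "S \<noteq> 0" using s S_def by simp
  have ab: "x/S + y/S = 1" using S0 unfolding S_def by (simp add: add_divide_distrib[symmetric])
  note N = norm_id[OF ab, of Q P]
  have "1/(x^p*y^q) = ((y/S)^(Suc Q) * (\<Sum>k\<le>P. real (Q + k choose k) * (x/S)^k)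
       + (x/S)^(Suc P) * (\<Sum>k\<le>Q. real (P + k choose k) * (y/S)^k)) / (x^p*y^q)"
    using N by simp
  also have "\<dots> = (\<Sum>k\<le>P. real (Q + k choose k) * ((y/S)^Suc Q * (x/S)^k / (x^Suc P * y^Suc Q)))
     + (\<Sum>k\<le>Q. real (P + k choose k) * ((x/S)^Suc P * (y/S)^k / (y^Suc Q * x^Suc P)))"
    unfolding P Q add_divide_distrib sum_distrib_left sum_divide_distrib
    by (intro arg_cong2[where f="(+)"] sum.cong refl) (simp_all add: algebra_simps)
  also have "\<dots> = (\<Sum>k\<le>P. real (Q + k choose k) * (1/(S^(Suc Q + k) * x^(Suc P - k))))
     + (\<Sum>k\<le>Q. real (P + k choose k) * (1/(S^(Suc P + k) * y^(Suc Q - k))))"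
    using term_simp[OF x y S0] term_simp[OF y x S0] by simp
  finally show ?thesis unfolding P Q S_def lessThan_Suc_atMost by simp
qed

lemma reflect_sum:
  fixes g :: "nat \<Rightarrow> real"
  shows "(\<Sum>k<p. g k) = (\<Sum>i=1..p. g (p - i))"
  by (rule sum.reindex_bij_witness[of _ "\<lambda>i. p - i" "\<lambda>k. p - k"]) auto

lemma pf:
  fixes x y :: real
  assumes x: "x \<noteq> 0" and y: "y \<noteq> 0" and s: "x + y \<noteq> 0" and p: "p \<ge> 1" and q: "q \<ge> 1"
  shows "1/(x^p*y^q) = (\<Sum>i=1..p. real (p+q-1-i choose (q-1))/((x+y)^(p+q-i)*x^i))
                      + (\<Sum>i=1..q. real (p+q-1-i choose (p-1))/((x+y)^(p+q-i)*y^i))"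
proof -
  have A: "(\<Sum>k<p. real (q-1+k choose k)/((x+y)^(q+k)*x^(p-k)))
        = (\<Sum>i=1..p. real (p+q-1-i choose (q-1))/((x+y)^(p+q-i)*x^i))"
  proof -
    have "(\<Sum>k<p. real (q-1+k choose k)/((x+y)^(q+k)*x^(p-k)))
       = (\<Sum>i=1..p. real (q-1+(p-i) choose (p-i))/((x+y)^(q+(p-i))*x^(p-(p-i))))"
      by (rule reflect_sum)
    also have "\<dots> = (\<Sum>i=1..p. real (p+q-1-i choose (q-1))/((x+y)^(p+q-i)*x^i))"
    proof (rule sum.cong)
      fix i assume i: "i \<in> {1..p}"
      have e1: "q-1+(p-i) = p+q-1-i" and e2: "q+(p-i) = p+q-i" and e3: "p-(p-i) = i" using i q by auto
      have e4: "(p+q-1-i choose (p-i)) = (p+q-1-i choose (q-1))"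
        using i q by (subst binomial_symmetric) (auto intro: arg_cong[where f="\<lambda>t. _ choose t"])
      show "real (q-1+(p-i) choose (p-i))/((x+y)^(q+(p-i))*x^(p-(p-i)))
          = real (p+q-1-i choose (q-1))/((x+y)^(p+q-i)*x^i)" by (simp only: e1 e2 e3 e4)
    qed simp
    finally show ?thesis .
  qed
  have B: "(\<Sum>k<q. real (p-1+k choose k)/((x+y)^(p+k)*y^(q-k)))
        = (\<Sum>i=1..q. real (p+q-1-i choose (p-1))/((x+y)^(p+q-i)*y^i))"
  proof -
    have "(\<Sum>k<q. real (p-1+k choose k)/((x+y)^(p+k)*y^(q-k)))
       = (\<Sum>i=1..q. real (p-1+(q-i) choose (q-i))/((x+y)^(p+(q-i))*y^(q-(q-i))))"
      by (rule reflect_sum)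
    also have "\<dots> = (\<Sum>i=1..q. real (p+q-1-i choose (p-1))/((x+y)^(p+q-i)*y^i))"
    proof (rule sum.cong)
      fix i assume i: "i \<in> {1..q}"
      have e1: "p-1+(q-i) = p+q-1-i" and e2: "p+(q-i) = p+q-i" and e3: "q-(q-i) = i" using i p by auto
      have e4: "(p+q-1-i choose (q-i)) = (p+q-1-i choose (p-1))"
        using i p by (subst binomial_symmetric) (auto intro: arg_cong[where f="\<lambda>t. _ choose t"])
      show "real (p-1+(q-i) choose (q-i))/((x+y)^(p+(q-i))*y^(q-(q-i)))
          = real (p+q-1-i choose (p-1))/((x+y)^(p+q-i)*y^i)" by (simp only: e1 e2 e3 e4)
    qed simp
    finally show ?thesis .
  qed
  show ?thesis using pf_k[OF assms] A B by simp
qed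



lemma has_sum_sum_fin:
  fixes f :: "'i \<Rightarrow> 'a \<Rightarrow> real"
  assumes "finite I" "\<And>i. i \<in> I \<Longrightarrow> (f i has_sum s i) A"
  shows "((\<lambda>x. \<Sum>i\<in>I. f i x) has_sum (\<Sum>i\<in>I. s i)) A"
  using assms
proof (induction I rule: finite_induct)
  case empty then show ?case by simp
next
  case (insert i I)
  then show ?case by (simp add: has_sum_add)
qed

lemma has_sum_diff':
  fixes f g :: "'a \<Rightarrow> real"
  assumes "(f has_sum a) A" "(g has_sum b) A"
  shows "((\<lambda>x. f x - g x) has_sum (a - b)) A"
  using has_sum_add[OF assms(1) has_sum_uminusI[OF assms(2)]] by simp

lemma zeta_UNIV:
  assumes "k \<ge> 2"
  shows "((\<lambda>n::nat. 1/real (Suc n)^k) has_sum zeta_nat k) UNIV"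
proof -
  have "summable (\<lambda>n::nat. inverse (real n ^ k))"
    using inverse_power_summable[OF assms] by simp
  then have "summable (\<lambda>n::nat. inverse (real (Suc n) ^ k))"
    by (subst summable_Suc_iff)
  then have "summable (\<lambda>n::nat. 1/real (Suc n)^k)" by (simp add: divide_inverse)
  then have "(\<lambda>n::nat. 1/real (Suc n)^k) sums zeta_nat k"
    using assms unfolding zeta_nat_def by (simp add: summable_sums)
  then show ?thesis by (rule sums_nonneg_imp_has_sum) simp
qed

lemma zeta_from1:
  assumes "k \<ge> 2"
  shows "((\<lambda>n::nat. 1/real n^k) has_sum zeta_nat k) {1..}"
proof -
  have "((\<lambda>n::nat. 1/real (Suc n)^k) has_sum zeta_nat k) UNIV
        = ((\<lambda>n::nat. 1/real n^k) has_sum zeta_nat k) {1..}"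
    by (rule has_sum_reindex_bij_witness[where j=Suc and i="\<lambda>n. n - 1"]) auto
  then show ?thesis using zeta_UNIV[OF assms] by simp
qed

lemma telescope_shift:
  fixes f :: "nat \<Rightarrow> real"
  assumes "f \<longlonglongrightarrow> 0"
  shows "(\<lambda>n. f n - f (n + a)) sums (\<Sum>k<a. f k)"
proof -
  have "\<And>k. (\<lambda>n. f (n + k) - f (Suc (n + k))) sums (f k)"
  proof -
    fix k
    have "(\<lambda>n. f (n + k)) \<longlonglongrightarrow> 0" using LIMSEQ_ignore_initial_segment[OF assms, of k] .
    from telescope_sums'[OF this] show "(\<lambda>n. f (n + k) - f (Suc (n + k))) sums (f k)" by simp
  qed
  then have "(\<lambda>n. \<Sum>k<a. f (n + k) - f (Suc (n + k))) sums (\<Sum>k<a. f k)"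
    by (rule sums_sum)
  moreover have "(\<Sum>k<a. f (n + k) - f (Suc (n + k))) = f n - f (n + a)" for n
    using sum_lessThan_telescope'[of "\<lambda>k. f (n + k)" a] by simp
  ultimately show ?thesis by simp
qed



lemma fin_identity:
  fixes u i :: nat
  assumes u: "u \<ge> 1"
  shows "(\<Sum>v\<in>{1..<u}. 1/(real u - real v)^i + 1/(real u + real v)^i)
       = (\<Sum>k<2*u. 1/real (Suc k)^i) - 1/real u^i - 1/(2*real u)^i"
proof -
  define F where "F k = 1/real k^i" for k :: nat
  have A: "(\<Sum>v\<in>{1..<u}. 1/(real u - real v)^i) = (\<Sum>k\<in>{1..<u}. F k)"
    unfolding F_def
    by (rule sum.reindex_bij_witness[of _ "\<lambda>k. u - k" "\<lambda>v. u - v"]) (auto simp: of_nat_diff)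
  have B: "(\<Sum>v\<in>{1..<u}. 1/(real u + real v)^i) = (\<Sum>k\<in>{Suc u..<2*u}. F k)"
    unfolding F_def
    by (rule sum.reindex_bij_witness[of _ "\<lambda>k. k - u" "\<lambda>v. u + v"]) auto
  have C: "(\<Sum>k<2*u. 1/real (Suc k)^i) = (\<Sum>k\<in>{1..<Suc (2*u)}. F k)"
    unfolding F_def
    by (rule sum.reindex_bij_witness[of _ "\<lambda>k. k - 1" "Suc"]) auto
  have D: "(\<Sum>k\<in>{1..<Suc (2*u)}. F k) = (\<Sum>k\<in>{1..<u}. F k) + F u + (\<Sum>k\<in>{Suc u..<2*u}. F k) + F (2*u)"
  proof -
    have "(\<Sum>k\<in>{1..<Suc (2*u)}. F k) = (\<Sum>k\<in>{1..<u}. F k) + (\<Sum>k\<in>{u..<Suc (2*u)}. F k)"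
      using u by (simp add: sum.atLeastLessThan_concat)
    also have "(\<Sum>k\<in>{u..<Suc (2*u)}. F k) = F u + (\<Sum>k\<in>{Suc u..<Suc (2*u)}. F k)"
      using u by (simp add: sum.atLeast_Suc_lessThan)
    also have "(\<Sum>k\<in>{Suc u..<Suc (2*u)}. F k) = (\<Sum>k\<in>{Suc u..<2*u}. F k) + F (2*u)"
      using u by (simp add: sum.atLeastLessThan_Suc)
    finally show ?thesis by simp
  qed
  have "F (2*u) = 1/(2*real u)^i" unfolding F_def by simp
  moreover have "F u = 1/real u^i" unfolding F_def by simp
  ultimately show ?thesis using A B C D by (simp add: sum.distrib)
qed

lemma Ei:
  fixes u i :: nat
  assumes u: "u \<ge> 1" and i: "i \<ge> 1"
  shows "((\<lambda>v::nat. 1/(real u - real v)^i + 1/(real u + real v)^i) has_sum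
          ((1+(-1)^i)*zeta_nat i - (1 + 1/2^i)/real u^i)) ({1..} - {u})"
proof -
  define h where "h v = 1/(real u - real v)^i + 1/(real u + real v)^i" for v :: nat
  define f where "f n = 1/real (Suc n)^i" for n :: nat
  define H where "H = (\<Sum>k<2*u. f k)"
  have f0: "f \<longlonglongrightarrow> 0"
  proof -
    have "(\<lambda>n. (inverse (real (Suc n)))^i) \<longlonglongrightarrow> 0^i"
      by (intro tendsto_power LIMSEQ_inverse_real_of_nat)
    moreover have "(0::real)^i = 0" using i by simp
    ultimately show ?thesis unfolding f_def by (simp add: power_inverse divide_inverse)
  qed
  have g: "((\<lambda>n. f n - f (n + 2*u)) has_sum H) UNIV"
  proof (rule sums_nonneg_imp_has_sum)
    show "(\<lambda>n. f n - f (n + 2*u)) sums H" unfolding H_def by (rule telescope_shift[OF f0])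
    fix n
    have "real (Suc n)^i \<le> real (Suc (n + 2*u))^i" by (intro power_mono) auto
    then show "0 \<le> f n - f (n + 2*u)" unfolding f_def
      by (simp add: frac_le)
  qed
  have z: "((\<lambda>n. (1+(-1)^i) * f n) has_sum ((1+(-1)^i)*zeta_nat i)) UNIV"
  proof (cases "even i")
    case True
    then have "i \<ge> 2" using i by presburger
    from has_sum_cmult_right[OF zeta_UNIV[OF this]] show ?thesis unfolding f_def .
  next
    case False
    then show ?thesis by simp
  qed
  have tail0: "((\<lambda>n. (1+(-1)^i) * f n - (f n - f (n + 2*u))) has_sum ((1+(-1)^i)*zeta_nat i - H)) UNIV"
    by (rule has_sum_diff'[OF z g])
  have pw: "h (u + Suc n) = (1+(-1)^i) * f n - (f n - f (n + 2*u))" for n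
  proof -
    have e1: "real u - real (u + Suc n) = - real (Suc n)" by simp
    have e2: "real u + real (u + Suc n) = real (Suc (n + 2*u))" by simp
    show ?thesis
    proof (cases "even i")
      case True
      then have "(- real (Suc n))^i = real (Suc n)^i" by (rule power_minus_even)
      then show ?thesis unfolding h_def f_def e1 e2 using True by simp
    next
      case False
      then have "(- real (Suc n))^i = - (real (Suc n)^i)" by (rule power_minus_odd)
      then show ?thesis unfolding h_def f_def e1 e2 using False by simp
    qed
  qed
  have tail: "(h has_sum ((1+(-1)^i)*zeta_nat i - H)) {u<..}"
  proof -
    have "((\<lambda>n. h (u + Suc n)) has_sum ((1+(-1)^i)*zeta_nat i - H)) UNIV"
      using tail0 pw by simp
    moreover have "((\<lambda>n. h (u + Suc n)) has_sum ((1+(-1)^i)*zeta_nat i - H)) UNIV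
        = (h has_sum ((1+(-1)^i)*zeta_nat i - H)) {u<..}"
      by (rule has_sum_reindex_bij_witness[where j="\<lambda>n. u + Suc n" and i="\<lambda>v. v - u - 1"]) auto
    ultimately show ?thesis by simp
  qed
  have fin: "(h has_sum (sum h {1..<u})) {1..<u}" by (rule has_sum_finiteI) auto
  have un: "(h has_sum (sum h {1..<u} + ((1+(-1)^i)*zeta_nat i - H))) ({1..<u} \<union> {u<..})"
    by (rule has_sum_Un_disjoint[OF fin tail]) auto
  have set: "{1..<u} \<union> {u<..} = {1..} - {u}" by auto
  have val: "sum h {1..<u} + ((1+(-1)^i)*zeta_nat i - H) = (1+(-1)^i)*zeta_nat i - (1 + 1/2^i)/real u^i"
  proof -
    have fi: "sum h {1..<u} = H - 1/real u^i - 1/(2*real u)^i"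
      using fin_identity[OF u, of i] unfolding h_def H_def f_def .
    have a: "1/(2*real u)^i = (1/2^i)/real u^i" by (simp add: power_mult_distrib)
    have b: "(1 + 1/2^i)/real u^i = 1/real u^i + (1/2^i)/real u^i" by (simp add: add_divide_distrib)
    show ?thesis unfolding fi b a[symmetric] by simp
  qed
  show ?thesis using un unfolding set val h_def .
qed



lemma even_split:
  fixes G :: "nat \<Rightarrow> real"
  shows "(\<Sum>i=1..p. (1+(-1)^i) * G i) = 2 * (\<Sum>j=1..p div 2. G (2*j))"
proof (induction p)
  case 0 then show ?case by simp
next
  case (Suc p)
  show ?case
  proof (cases "even (Suc p)")
    case True
    then have d: "Suc p div 2 = Suc (p div 2)" by presburger
    have e: "2 * Suc (p div 2) = Suc p" using True by presburger
    show ?thesis using Suc True unfolding d by (simp add: e algebra_simps)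
  next
    case False
    then have d: "Suc p div 2 = p div 2" by presburger
    show ?thesis using Suc False unfolding d by simp
  qed
qed

lemma hockey:
  assumes p: "p \<ge> 1" and q: "q \<ge> 1"
  shows "(\<Sum>i=1..p. real (p+q-1-i choose (q-1))) = real (p+q-1 choose (p-1))"
proof -
  have "(\<Sum>k<p. real (q-1+k choose k)) = (\<Sum>i=1..p. real (q-1+(p-i) choose (p-i)))"
    by (rule reflect_sum)
  also have "\<dots> = (\<Sum>i=1..p. real (p+q-1-i choose (q-1)))"
  proof (rule sum.cong)
    fix i assume i: "i \<in> {1..p}"
    have e1: "q-1+(p-i) = p+q-1-i" using i q by auto
    have e4: "(p+q-1-i choose (p-i)) = (p+q-1-i choose (q-1))"
      using i q by (subst binomial_symmetric) (auto intro: arg_cong[where f="\<lambda>t. _ choose t"])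
    show "real (q-1+(p-i) choose (p-i)) = real (p+q-1-i choose (q-1))" by (simp only: e1 e4)
  qed simp
  finally have "(\<Sum>i=1..p. real (p+q-1-i choose (q-1))) = real (\<Sum>k<p. (q-1+k choose k))" by simp
  also have "(\<Sum>k<p. (q-1+k choose k)) = (\<Sum>k\<le>p-1. (q-1+k choose k))"
    using p by (metis Suc_pred' less_eq_Suc_le One_nat_def lessThan_Suc_atMost)
  also have "\<dots> = Suc (q-1+(p-1)) choose (p-1)" by (rule sum_choose_lower)
  also have "Suc (q-1+(p-1)) = p+q-1" using p q by simp
  finally show ?thesis .
qed

definition Aterm :: "nat \<Rightarrow> nat \<Rightarrow> real" where
  "Aterm p q = (\<Sum>i=1..p. real (p+q-1-i choose (q-1))/2^(p+q-i) *
      ((1+(-1)^i)*zeta_nat i*zeta_nat (p+q-i) - (1+1/2^i)*zeta_nat (p+q)))"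

definition Eterm :: "nat \<Rightarrow> nat \<Rightarrow> real" where
  "Eterm p q = (\<Sum>j=1..p div 2. real (p+q-1-2*j choose (q-1))/2^(p+q-2*j) * zeta_nat (2*j)*zeta_nat (p+q-2*j))"

definition Sterm :: "nat \<Rightarrow> nat \<Rightarrow> real" where
  "Sterm p q = (\<Sum>i=1..p. real (p+q-1-i choose (q-1))/2^(p+q-i))"

lemma Aterm_split:
  assumes p: "p \<ge> 1" and q: "q \<ge> 1"
  shows "Aterm p q = 2 * Eterm p q - zeta_nat (p+q) * Sterm p q
           - zeta_nat (p+q) * real (p+q-1 choose (p-1)) / 2^(p+q)"
proof -
  define a where "a i = real (p+q-1-i choose (q-1))" for i
  define Z where "Z = zeta_nat (p+q)"
  have "Aterm p q = (\<Sum>i=1..p. (1+(-1)^i) * (a i/2^(p+q-i) * zeta_nat i*zeta_nat (p+q-i)))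
     - Z * (\<Sum>i=1..p. a i/2^(p+q-i)) - Z * (\<Sum>i=1..p. a i/2^(p+q-i)/2^i)"
    unfolding Aterm_def a_def[symmetric] Z_def[symmetric]
    by (simp add: sum_distrib_left sum_subtractf[symmetric] algebra_simps add_divide_distrib
        flip: sum.distrib)
  also have "(\<Sum>i=1..p. a i/2^(p+q-i)/2^i) = (\<Sum>i=1..p. a i) / 2^(p+q)"
  proof -
    have "(\<Sum>i=1..p. a i/2^(p+q-i)/2^i) = (\<Sum>i=1..p. a i / 2^(p+q))"
    proof (rule sum.cong)
      fix i assume "i \<in> {1..p}"
      then have "(2::real)^(p+q-i) * 2^i = 2^(p+q)" by (simp flip: power_add)
      then show "a i/2^(p+q-i)/2^i = a i / 2^(p+q)" by (simp add: divide_divide_eq_left)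
    qed simp
    then show ?thesis by (simp add: sum_divide_distrib)
  qed
  also have "(\<Sum>i=1..p. a i) = real (p+q-1 choose (p-1))" unfolding a_def by (rule hockey[OF p q])
  also have "(\<Sum>i=1..p. (1+(-1)^i) * (a i/2^(p+q-i) * zeta_nat i*zeta_nat (p+q-i))) = 2 * Eterm p q"
    unfolding even_split Eterm_def a_def by (simp add: mult.assoc)
  finally show ?thesis unfolding Sterm_def Z_def a_def by simp
qed

lemma Sterm_sum:
  assumes p: "p \<ge> 1" and q: "q \<ge> 1"
  shows "Sterm p q + Sterm q p = 1"
proof -
  have "1/((1::real)^p*1^q) = (\<Sum>i=1..p. real (p+q-1-i choose (q-1))/((1+1)^(p+q-i)*1^i))
                      + (\<Sum>i=1..q. real (p+q-1-i choose (p-1))/((1+1)^(p+q-i)*1^i))"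
    by (rule pf) (use p q in auto)
  then show ?thesis unfolding Sterm_def by (simp add: add.commute)
qed

lemma final_algebra:
  assumes p: "p \<ge> 2" and q: "q \<ge> 2"
  shows "Aterm p q + Aterm q p =
    2 * (\<Sum>j=0..p div 2. 1 / 2 ^ (p + q - 2*j) * real ((p + q - 1 - 2*j) choose (q - 1))
            * zeta_nat (2*j) * zeta_nat (p + q - 2*j))
  + 2 * (\<Sum>j=0..q div 2. 1 / 2 ^ (p + q - 2*j) * real ((p + q - 1 - 2*j) choose (p - 1))
            * zeta_nat (2*j) * zeta_nat (p + q - 2*j))
  - zeta_nat (p + q)"
proof -
  have z0: "zeta_nat 0 = -1/2" by (simp add: zeta_nat_def)
  have B1: "(\<Sum>j=0..p div 2. 1 / 2 ^ (p + q - 2*j) * real ((p + q - 1 - 2*j) choose (q - 1))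
            * zeta_nat (2*j) * zeta_nat (p + q - 2*j))
       = Eterm p q - real (p+q-1 choose (q-1)) * zeta_nat (p+q) / 2^(p+q) / 2"
    unfolding Eterm_def by (simp add: sum.atLeast_Suc_atMost z0 algebra_simps)
  have B2: "(\<Sum>j=0..q div 2. 1 / 2 ^ (p + q - 2*j) * real ((p + q - 1 - 2*j) choose (p - 1))
            * zeta_nat (2*j) * zeta_nat (p + q - 2*j))
       = Eterm q p - real (p+q-1 choose (p-1)) * zeta_nat (p+q) / 2^(p+q) / 2"
    unfolding Eterm_def by (simp add: sum.atLeast_Suc_atMost z0 algebra_simps add.commute)
  have A1: "Aterm p q = 2 * Eterm p q - zeta_nat (p+q) * Sterm p q
           - zeta_nat (p+q) * real (p+q-1 choose (p-1)) / 2^(p+q)"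
    using Aterm_split[of p q] p q by simp
  have A2: "Aterm q p = 2 * Eterm q p - zeta_nat (p+q) * Sterm q p
           - zeta_nat (p+q) * real (p+q-1 choose (q-1)) / 2^(p+q)"
    using Aterm_split[of q p] p q by (simp add: add.commute)
  have S: "zeta_nat (p+q) * Sterm p q + zeta_nat (p+q) * Sterm q p = zeta_nat (p+q)"
    using Sterm_sum[of p q] p q by (metis distrib_left mult_1_right one_le_numeral order_trans)
  show ?thesis unfolding B1 B2 using A1 A2 S by (simp add: algebra_simps)
qed



lemma g_summable:
  assumes a: "a \<ge> 2" and b: "b \<ge> 2"
  shows "(\<lambda>(m,n). 1/((real n)^a * (real (2*m + n))^b)) summable_on ({1::nat..} \<times> {1::nat..})"
proof -
  define h where "h = (\<lambda>(m::nat,n::nat). (1/real m^2) * (1/real n^2))"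
  have hs: "h summable_on ({1::nat..} \<times> {1::nat..})"
  proof (rule summable_on_SigmaI[where g="\<lambda>m. 1/real m^2 * zeta_nat 2"])
    fix m :: nat assume "m \<in> {1..}"
    show "((\<lambda>n. h (m, n)) has_sum 1/real m^2 * zeta_nat 2) {1..}"
      unfolding h_def case_prod_conv by (rule has_sum_cmult_right[OF zeta_from1]) simp
  next
    show "(\<lambda>m. 1/real m^2 * zeta_nat 2) summable_on {1..}"
      using has_sum_cmult_left[OF zeta_from1[of 2]] summable_on_def by fastforce
  next
    fix m n :: nat show "0 \<le> h (m, n)" unfolding h_def by simp
  qed
  show ?thesis
  proof (rule summable_on_comparison_test[OF hs])
    fix x assume "x \<in> {1::nat..} \<times> {1::nat..}"
    then obtain m n where x: "x = (m,n)" and m: "m \<ge> 1" and n: "n \<ge> 1" by auto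
    have "real n^2 \<le> real n^a" using n a by (intro power_increasing) auto
    moreover have "real m^2 \<le> real (2*m+n)^b"
    proof -
      have "real m^2 \<le> real (2*m+n)^2" by (intro power_mono) auto
      also have "\<dots> \<le> real (2*m+n)^b" using m b by (intro power_increasing) auto
      finally show ?thesis .
    qed
    ultimately have le: "real m^2 * real n^2 \<le> real n^a * real (2*m+n)^b"
      by (metis mult.commute mult_mono zero_le_power2 of_nat_0_le_iff zero_le_power)
    have pos: "0 < real m^2 * real n^2" using m n by simp
    show "(case x of (m, n) \<Rightarrow> 1/((real n)^a * (real (2*m + n))^b)) \<le> h x"
      unfolding x h_def using le pos by (simp add: frac_le)
    show "0 \<le> (case x of (m, n) \<Rightarrow> 1/((real n)^a * (real (2*m + n))^b))"
      unfolding x by simp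
  qed
qed

lemma zeta2_has_sum:
  assumes a: "a \<ge> 2" and b: "b \<ge> 2"
  shows "((\<lambda>(m,n). 1/((real n)^a * (real (2*m + n))^b)) has_sum zeta2_sharp a b) ({1::nat..} \<times> {1::nat..})"
  unfolding zeta2_sharp_def using g_summable[OF a b] by (rule has_sum_infsum)

definition FF :: "nat \<Rightarrow> nat \<Rightarrow> nat \<times> nat \<Rightarrow> real" where
  "FF a b = (\<lambda>(u,v). 1/((real u - real v)^a * (real u + real v)^b))"

lemma neg_pow_div:
  fixes x y :: real
  shows "1/((-x)^a * y) = (-1)^a * (1/(x^a*y))"
  by (cases "even a") simp_all

lemma W1_has_sum:
  assumes a: "a \<ge> 2" and b: "b \<ge> 2"
  shows "(FF a b has_sum ((-1)^a * zeta2_sharp a b)) {(u,v). 1 \<le> u \<and> u < v}"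
proof -
  have h: "((\<lambda>x. (-1)^a * (\<lambda>(m,n). 1/((real n)^a * (real (2*m + n))^b)) x) has_sum ((-1)^a * zeta2_sharp a b)) ({1::nat..} \<times> {1::nat..})"
    by (rule has_sum_cmult_right[OF zeta2_has_sum[OF a b]])
  have "((\<lambda>x. (-1)^a * (\<lambda>(m,n). 1/((real n)^a * (real (2*m + n))^b)) x) has_sum ((-1)^a * zeta2_sharp a b)) ({1::nat..} \<times> {1::nat..})
     = (FF a b has_sum ((-1)^a * zeta2_sharp a b)) {(u,v). 1 \<le> u \<and> u < v}"
  proof (rule has_sum_reindex_bij_witness[where j="\<lambda>(m,n). (m, m+n)" and i="\<lambda>(u,v). (u, v-u)"])
    fix x :: "nat \<times> nat" assume "x \<in> {1..} \<times> {1..}"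
    then obtain m n where x: "x = (m,n)" and "m \<ge> 1" "n \<ge> 1" by auto
    have e1: "real m - real (m+n) = - real n" by simp
    have e2: "real m + real (m+n) = real (2*m+n)" by simp
    show "FF a b ((\<lambda>(m,n). (m, m+n)) x) = (-1)^a * (\<lambda>(m,n). 1/((real n)^a * (real (2*m + n))^b)) x"
      unfolding x FF_def by (simp only: case_prod_conv e1 e2 neg_pow_div)
  qed auto
  then show ?thesis using h by simp
qed

lemma W2_has_sum:
  assumes a: "a \<ge> 2" and b: "b \<ge> 2"
  shows "(FF a b has_sum (zeta2_sharp a b)) {(u,v). 1 \<le> v \<and> v < u}"
proof -
  have "((\<lambda>(m,n). 1/((real n)^a * (real (2*m + n))^b)) has_sum (zeta2_sharp a b)) ({1::nat..} \<times> {1::nat..})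
     = (FF a b has_sum (zeta2_sharp a b)) {(u,v). 1 \<le> v \<and> v < u}"
  proof (rule has_sum_reindex_bij_witness[where j="\<lambda>(m,n). (m+n, m)" and i="\<lambda>(u,v). (v, u-v)"])
    fix x :: "nat \<times> nat" assume "x \<in> {1..} \<times> {1..}"
    then obtain m n where x: "x = (m,n)" and "m \<ge> 1" "n \<ge> 1" by auto
    have e1: "real (m+n) - real m = real n" by simp
    have e2: "real (m+n) + real m = real (2*m+n)" by simp
    show "FF a b ((\<lambda>(m,n). (m+n, m)) x) = (\<lambda>(m,n). 1/((real n)^a * (real (2*m + n))^b)) x"
      unfolding x FF_def by (simp only: case_prod_conv e1 e2)
  qed auto
  then show ?thesis using zeta2_has_sum[OF a b] by simp
qed



lemma term_has_sum:
  assumes i: "1 \<le> i" and K: "i + 2 \<le> K"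
  shows "((\<lambda>u::nat. c/(2*real u)^(K-i) * ((1+(-1)^i)*z - (1+1/2^i)/real u^i)) has_sum
          (c/2^(K-i) * ((1+(-1)^i)*z*zeta_nat (K-i) - (1+1/2^i)*zeta_nat K))) {1..}"
proof -
  have h1: "((\<lambda>u::nat. (c/2^(K-i)*((1+(-1)^i)*z)) * (1/real u^(K-i))) has_sum
              (c/2^(K-i)*((1+(-1)^i)*z) * zeta_nat (K-i))) {1..}"
    by (rule has_sum_cmult_right[OF zeta_from1]) (use K in simp)
  have h2: "((\<lambda>u::nat. (c/2^(K-i)*(1+1/2^i)) * (1/real u^K)) has_sum
              (c/2^(K-i)*(1+1/2^i) * zeta_nat K)) {1..}"
    by (rule has_sum_cmult_right[OF zeta_from1]) (use K in simp)
  have h: "((\<lambda>u::nat. (c/2^(K-i)*((1+(-1)^i)*z)) * (1/real u^(K-i)) - (c/2^(K-i)*(1+1/2^i)) * (1/real u^K)) has_sum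
          (c/2^(K-i) * ((1+(-1)^i)*z*zeta_nat (K-i) - (1+1/2^i)*zeta_nat K))) {1..}"
  proof -
    have e: "c/2^(K-i)*((1+(-1)^i)*z) * zeta_nat (K-i) - c/2^(K-i)*(1+1/2^i) * zeta_nat K
        = c/2^(K-i) * ((1+(-1)^i)*z*zeta_nat (K-i) - (1+1/2^i)*zeta_nat K)"
      by (simp only: right_diff_distrib mult.assoc)
    show ?thesis by (subst e[symmetric]) (rule has_sum_diff'[OF h1 h2])
  qed
  show ?thesis
  proof (subst has_sum_cong)
    fix u :: nat assume u: "u \<in> {1..}"
    have pu: "real u^K = real u^(K-i) * real u^i"
      using K by (simp flip: power_add)
    have u0: "real u \<noteq> 0" using u by simp
    show "c/(2*real u)^(K-i) * ((1+(-1)^i)*z - (1+1/2^i)/real u^i)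
        = (c/2^(K-i)*((1+(-1)^i)*z)) * (1/real u^(K-i)) - (c/2^(K-i)*(1+1/2^i)) * (1/real u^K)"
      unfolding pu using u0 by (simp add: power_mult_distrib field_simps)
  qed (rule h)
qed



theorem theorem6p4:
  fixes p q :: nat
  assumes "p \<ge> 2" and "q \<ge> 2"
  shows "(1 + (-1)^p) * zeta2_sharp p q + (1 + (-1)^q) * zeta2_sharp q p =
    2 * (\<Sum>j=0..p div 2. 1 / 2 ^ (p + q - 2*j) * real ((p + q - 1 - 2*j) choose (q - 1))
            * zeta_nat (2*j) * zeta_nat (p + q - 2*j))
  + 2 * (\<Sum>j=0..q div 2. 1 / 2 ^ (p + q - 2*j) * real ((p + q - 1 - 2*j) choose (p - 1))
            * zeta_nat (2*j) * zeta_nat (p + q - 2*j))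
  - zeta_nat (p + q)"
proof -
  note p2 = assms(1) and q2 = assms(2)
  have p1: "p \<ge> 1" and q1: "q \<ge> 1" using p2 q2 by auto
  define W1 where "W1 = {(u::nat,v::nat). 1 \<le> u \<and> u < v}"
  define W2 where "W2 = {(u::nat,v::nat). 1 \<le> v \<and> v < u}"
  define LHS where "LHS = (1 + (-1)^p) * zeta2_sharp p q + (1 + (-1)^q) * zeta2_sharp q p"
  have h1: "(FF p q has_sum ((-1)^p * zeta2_sharp p q + zeta2_sharp p q)) (W1 \<union> W2)"
    unfolding W1_def W2_def by (rule has_sum_Un_disjoint[OF W1_has_sum[OF p2 q2] W2_has_sum[OF p2 q2]]) auto
  have h2: "(FF q p has_sum ((-1)^q * zeta2_sharp q p + zeta2_sharp q p)) (W1 \<union> W2)"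
    unfolding W1_def W2_def by (rule has_sum_Un_disjoint[OF W1_has_sum[OF q2 p2] W2_has_sum[OF q2 p2]]) auto
  have hW: "((\<lambda>x. FF p q x + FF q p x) has_sum LHS) (W1 \<union> W2)"
  proof -
    have e: "(-1)^p * zeta2_sharp p q + zeta2_sharp p q + ((-1)^q * zeta2_sharp q p + zeta2_sharp q p) = LHS"
      unfolding LHS_def by (simp add: algebra_simps)
    show ?thesis by (subst e[symmetric]) (rule has_sum_add[OF h1 h2])
  qed
  have Wset: "W1 \<union> W2 = Sigma {1..} (\<lambda>u. {1..} - {u})"
    unfolding W1_def W2_def by auto
  define E where "E i u = (1+(-1)^i)*zeta_nat i - (1 + 1/2^i)/real u^i" for i u :: nat
  define T where "T u = (\<Sum>i=1..p. real (p+q-1-i choose (q-1))/(2*real u)^(p+q-i) * E i u)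
                     + (\<Sum>i=1..q. real (p+q-1-i choose (p-1))/(2*real u)^(p+q-i) * E i u)" for u :: nat
  have inner: "((\<lambda>v. FF p q (u,v) + FF q p (u,v)) has_sum T u) ({1..} - {u})" if u: "u \<in> {1..}" for u
  proof -
    have u1: "u \<ge> 1" using u by simp
    define G where "G i v = 1/(real u - real v)^i + 1/(real u + real v)^i" for i v :: nat
    have Eh: "(G i has_sum E i u) ({1..} - {u})" if "i \<ge> 1" for i
      unfolding G_def E_def by (rule Ei[OF u1 that])
    have SA: "((\<lambda>v. \<Sum>i=1..p. real (p+q-1-i choose (q-1))/(2*real u)^(p+q-i) * G i v) has_sum
              (\<Sum>i=1..p. real (p+q-1-i choose (q-1))/(2*real u)^(p+q-i) * E i u)) ({1..} - {u})"
      by (rule has_sum_sum_fin, simp, rule has_sum_cmult_right, rule Eh) auto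
    have SB: "((\<lambda>v. \<Sum>i=1..q. real (p+q-1-i choose (p-1))/(2*real u)^(p+q-i) * G i v) has_sum
              (\<Sum>i=1..q. real (p+q-1-i choose (p-1))/(2*real u)^(p+q-i) * E i u)) ({1..} - {u})"
      by (rule has_sum_sum_fin, simp, rule has_sum_cmult_right, rule Eh) auto
    have S: "((\<lambda>v. (\<Sum>i=1..p. real (p+q-1-i choose (q-1))/(2*real u)^(p+q-i) * G i v)
               + (\<Sum>i=1..q. real (p+q-1-i choose (p-1))/(2*real u)^(p+q-i) * G i v)) has_sum T u) ({1..} - {u})"
      unfolding T_def by (rule has_sum_add[OF SA SB])
    show ?thesis
    proof (subst has_sum_cong)
      fix v assume v: "v \<in> {1..} - {u}"
      define x where "x = real u - real v"
      define y where "y = real u + real v"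
      have x0: "x \<noteq> 0" using v unfolding x_def by auto
      have y0: "y \<noteq> 0" using u1 unfolding y_def by auto
      have s: "x + y = 2 * real u" unfolding x_def y_def by simp
      have s0: "x + y \<noteq> 0" using u1 s by simp
      note P1 = pf[OF x0 y0 s0 p1 q1, unfolded s]
      note P2 = pf[OF x0 y0 s0 q1 p1, unfolded s add.commute[of q p]]
      have D: "\<And>c k i. c/(2*real u)^k * (1/x^i + 1/y^i) = c/((2*real u)^k*x^i) + c/((2*real u)^k*y^i)"
        by (simp add: distrib_left)
      have "(\<Sum>i=1..p. real (p+q-1-i choose (q-1))/(2*real u)^(p+q-i) * G i v)
            + (\<Sum>i=1..q. real (p+q-1-i choose (p-1))/(2*real u)^(p+q-i) * G i v)
          = ((\<Sum>i=1..p. real (p+q-1-i choose (q-1))/((2*real u)^(p+q-i)*x^i))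
             + (\<Sum>i=1..q. real (p+q-1-i choose (p-1))/((2*real u)^(p+q-i)*y^i)))
          + ((\<Sum>i=1..q. real (p+q-1-i choose (p-1))/((2*real u)^(p+q-i)*x^i))
             + (\<Sum>i=1..p. real (p+q-1-i choose (q-1))/((2*real u)^(p+q-i)*y^i)))"
        unfolding G_def x_def[symmetric] y_def[symmetric] D sum.distrib by simp
      also have "\<dots> = 1/(x^p*y^q) + 1/(x^q*y^p)" using P1 P2 by simp
      also have "\<dots> = FF p q (u,v) + FF q p (u,v)" unfolding FF_def x_def y_def by simp
      finally show "FF p q (u,v) + FF q p (u,v) =
          (\<Sum>i=1..p. real (p+q-1-i choose (q-1))/(2*real u)^(p+q-i) * G i v)
            + (\<Sum>i=1..q. real (p+q-1-i choose (p-1))/(2*real u)^(p+q-i) * G i v)" by simp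
    qed (rule S)
  qed
  have TL: "(T has_sum LHS) {1..}"
    by (rule has_sum_Sigma'[OF hW[unfolded Wset] inner])
  have TA: "(T has_sum (Aterm p q + Aterm q p)) {1..}"
  proof -
    have Aq: "Aterm q p = (\<Sum>i=1..q. real (p+q-1-i choose (p-1))/2^(p+q-i) *
      ((1+(-1)^i)*zeta_nat i*zeta_nat (p+q-i) - (1+1/2^i)*zeta_nat (p+q)))"
      unfolding Aterm_def by (simp only: add.commute[of q p])
    have SA: "((\<lambda>u. \<Sum>i=1..p. real (p+q-1-i choose (q-1))/(2*real u)^(p+q-i) * E i u) has_sum Aterm p q) {1..}"
      unfolding Aterm_def E_def
      by (rule has_sum_sum_fin, simp, rule term_has_sum) (use q2 in auto)
    have SB: "((\<lambda>u. \<Sum>i=1..q. real (p+q-1-i choose (p-1))/(2*real u)^(p+q-i) * E i u) has_sum Aterm q p) {1..}"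
      unfolding Aq E_def
      by (rule has_sum_sum_fin, simp, rule term_has_sum) (use p2 in auto)
    show ?thesis unfolding T_def by (rule has_sum_add[OF SA SB])
  qed
  have "LHS = Aterm p q + Aterm q p" using has_sum_unique[OF TL TA] .
  then show ?thesis using final_algebra[OF p2 q2] unfolding LHS_def by simp
qed

end
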